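(* For every complex number $x$ there exists a unital $\mathbb{C}$-algebra automorphism $\tau_x$ of $\tilde{\mathcal{A}}_{conv.}$ which commutes with the left and right actions of $B$ on $\tilde{\mathcal{A}}_{conv.}$ (i.e. $\tau_x(SXT)=S\tau_x(X)T$ for $S,T\in B$, $X\in\tilde{\mathcal{A}}_{conv.}$) and satisfies $$\tau_x(a)=a+xb,\qquad \tau_x(b)=b,\qquad \tau_x(1)=1.$$
   Context: $\widehat{\mathcal{A}}$ is the algebra of formal power series $\sum_{p,q\ge0}\gamma_{p,q}a^pb^q$ in variables $a,b$ with $ab-ba=b^2$ (the $(a,b)$-adic completion of the polynomial algebra with this relation). $\tilde{\mathcal{A}}_{conv.}\subset\widehat{\mathcal{A}}$ is the subalgebra of series with $|\gamma_{p,q}|\le C_RR^{p+q}q!$ for some $R>1$, $C_R>0$. $B=\mathbb{C}\{\{b\}\}\subset\tilde{\mathcal{A}}_{conv.}$ is the subalgebra of series $\sum c_qb^q$ with $|c_q|\le CR^qq!$ for some $C,R$. *)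

theory Defs
  imports Complex_Main
begin

text \<open>Elements of the completed algebra are represented by their coefficients
  gamma p q in the normal-ordered expansion sum gamma p q a^p b^q
  (powers of a to the left of powers of b).\<close>

type_synonym aser = "nat \<Rightarrow> nat \<Rightarrow> complex"

definition aadd :: "aser \<Rightarrow> aser \<Rightarrow> aser" where
  "aadd f g = (\<lambda>p q. f p q + g p q)"

definition ascale :: "complex \<Rightarrow> aser \<Rightarrow> aser" where
  "ascale c f = (\<lambda>p q. c * f p q)"

text \<open>Multiplication from the relation ab - ba = b^2, i.e.
  b^q a^r = sum_k (r choose k) (-1)^k q(q+1)...(q+k-1) a^(r-k) b^(q+k).
  Hence (a^p b^q)(a^r b^s) = sum_k (r choose k)(-1)^k pochhammer q k a^(p+r-k) b^(q+k+s).\<close>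

definition amul :: "aser \<Rightarrow> aser \<Rightarrow> aser" where
  "amul f g = (\<lambda>m n.
     (\<Sum>p\<le>m+n. \<Sum>q\<le>n. \<Sum>r\<le>m+n. \<Sum>s\<le>n. \<Sum>k\<le>n.
        if p + r = m + k \<and> q + k + s = n
        then f p q * g r s * of_nat (r choose k) * (-1) ^ k * pochhammer (of_nat q) k
        else 0))"

definition aone :: aser where
  "aone = (\<lambda>p q. if p = 0 \<and> q = 0 then 1 else 0)"

definition agen :: aser where
  "agen = (\<lambda>p q. if p = 1 \<and> q = 0 then 1 else 0)"

definition bgen :: aser where
  "bgen = (\<lambda>p q. if p = 0 \<and> q = 1 then 1 else 0)"

definition Aconv :: "aser set" where
  "Aconv = {f. \<exists>R::real. R > 1 \<and> (\<exists>C::real. C > 0 \<and>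
      (\<forall>p q. norm (f p q) \<le> C * R ^ (p + q) * fact q))}"

definition Bset :: "aser set" where
  "Bset = {f. (\<forall>p q. p \<noteq> 0 \<longrightarrow> f p q = 0) \<and>
      (\<exists>C R::real. \<forall>q. norm (f 0 q) \<le> C * R ^ q * fact q)}"

end

theory Submission
  imports Defs
begin


definition ffc :: "complex \<Rightarrow> nat \<Rightarrow> complex" where
  "ffc z k = (-1)^k * pochhammer (-z) k"

lemma ffc_Suc: "ffc z (Suc k) = ffc z k * (z - of_nat k)"
  by (simp add: ffc_def pochhammer_Suc algebra_simps)

lemma ffc_0[simp]: "ffc z 0 = 1" by (simp add: ffc_def)

lemma vdm:
  "pochhammer (w + z) r = (\<Sum>k\<le>r. of_nat (r choose k) * ffc z k * pochhammer (w + of_nat k) (r - k))"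
proof (induction r arbitrary: w)
  case 0
  then show ?case by simp
next
  case (Suc r w)
  define G where "G k = ffc z k * pochhammer (w + of_nat k) (Suc r - k)" for k
  have "pochhammer (w + z) (Suc r) = (w + z) * pochhammer ((w + 1) + z) r"
    by (simp add: pochhammer_rec algebra_simps)
  also have "\<dots> = (w + z) * (\<Sum>k\<le>r. of_nat (r choose k) * ffc z k * pochhammer (w + 1 + of_nat k) (r - k))"
    by (subst Suc) simp
  also have "\<dots> = (\<Sum>k\<le>r. of_nat (r choose k) * ffc z k * ((w + of_nat k) * pochhammer (w + of_nat k + 1) (r - k)))
     + (\<Sum>k\<le>r. of_nat (r choose k) * (ffc z k * (z - of_nat k)) * pochhammer (w + of_nat (Suc k)) (r - k))"
    by (simp add: sum_distrib_left sum.distrib[symmetric] algebra_simps)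
  also have "(\<Sum>k\<le>r. of_nat (r choose k) * ffc z k * ((w + of_nat k) * pochhammer (w + of_nat k + 1) (r - k)))
     = (\<Sum>k\<le>r. of_nat (r choose k) * G k)"
    unfolding G_def by (intro sum.cong refl) (simp add: Suc_diff_le pochhammer_rec)
  also have "(\<Sum>k\<le>r. of_nat (r choose k) * (ffc z k * (z - of_nat k)) * pochhammer (w + of_nat (Suc k)) (r - k))
     = (\<Sum>k\<le>r. of_nat (r choose k) * G (Suc k))"
    unfolding G_def by (intro sum.cong refl) (simp add: ffc_Suc)
  also have "(\<Sum>k\<le>r. of_nat (r choose k) * G k) = (\<Sum>k\<le>Suc r. of_nat (r choose k) * G k)"
    by simp
  also have "\<dots> = G 0 + (\<Sum>k\<le>r. of_nat (r choose Suc k) * G (Suc k))"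
    by (subst sum.atMost_Suc_shift) simp
  also have "G 0 + (\<Sum>k\<le>r. of_nat (r choose Suc k) * G (Suc k)) + (\<Sum>k\<le>r. of_nat (r choose k) * G (Suc k))
     = (\<Sum>k\<le>Suc r. of_nat (Suc r choose k) * G k)"
    by (subst sum.atMost_Suc_shift) (simp add: sum.distrib algebra_simps)
  finally show ?case unfolding G_def by (simp add: mult.assoc)
qed



definition sig :: "aser \<Rightarrow> nat \<Rightarrow> complex \<Rightarrow> complex" where
  "sig f N j = (\<Sum>p\<le>N. f p (N - p) * pochhammer (j + of_nat (N - p)) p)"

definition tau :: "complex \<Rightarrow> aser \<Rightarrow> aser" where
  "tau x f = (\<lambda>m n. \<Sum>k\<le>n. of_nat ((m + k) choose k) * ffc x k * f (m + k) (n - k))"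

lemma sum_rev_atMost: "(\<Sum>i\<le>n. g i) = (\<Sum>i\<le>n. g (n - i))" for g :: "nat \<Rightarrow> 'a::comm_monoid_add"
  by (rule sum.reindex_bij_witness[where i="\<lambda>i. n - i" and j="\<lambda>i. n - i"]) auto

lemma sum_tri: "(\<Sum>m\<le>N. \<Sum>k\<le>N - m. h m k) = (\<Sum>p\<le>N. \<Sum>m\<le>p. h m (p - m))"
  for h :: "nat \<Rightarrow> nat \<Rightarrow> 'a::comm_monoid_add"
proof -
  have "(\<Sum>m\<le>N. \<Sum>k\<le>N - m. h m k) = (\<Sum>(m,k)\<in>Sigma {..N} (\<lambda>m. {..N-m}). h m k)"
    by (rule sum.Sigma) auto
  also have "Sigma {..N} (\<lambda>m. {..N-m}) = {(m,k). m + k \<le> N}" by auto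
  also have "(\<Sum>(m,k)\<in>{(m,k). m + k \<le> N}. h m k) = (\<Sum>p\<le>N. \<Sum>m\<le>p. h m (p - m))"
    by (rule sum.triangle_reindex_eq)
  finally show ?thesis .
qed

lemma sig_tau: "sig (tau x f) N j = sig f N (j + x)"
proof -
  define h where "h m k = of_nat ((m + k) choose k) * ffc x k * f (m + k) (N - m - k) *
      pochhammer (j + of_nat (N - m)) m" for m k
  have "sig (tau x f) N j = (\<Sum>m\<le>N. \<Sum>k\<le>N - m. h m k)"
    unfolding sig_def tau_def h_def by (simp add: sum_distrib_right)
  also have "\<dots> = (\<Sum>p\<le>N. \<Sum>m\<le>p. h m (p - m))" by (rule sum_tri[of h N])
  also have "\<dots> = (\<Sum>p\<le>N. \<Sum>k\<le>p. h (p - k) k)"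
  proof (rule sum.cong[OF refl])
    fix p assume "p \<in> {..N}"
    have "(\<Sum>m\<le>p. h m (p - m)) = (\<Sum>k\<le>p. h (p - k) (p - (p - k)))"
      by (rule sum_rev_atMost[of "\<lambda>m. h m (p - m)" p])
    also have "\<dots> = (\<Sum>k\<le>p. h (p - k) k)" by (intro sum.cong refl) auto
    finally show "(\<Sum>m\<le>p. h m (p - m)) = (\<Sum>k\<le>p. h (p - k) k)" .
  qed
  also have "\<dots> = (\<Sum>p\<le>N. f p (N - p) * pochhammer ((j + of_nat (N - p)) + x) p)"
  proof (intro sum.cong refl)
    fix p assume p: "p \<in> {..N}"
    show "(\<Sum>k\<le>p. h (p - k) k) = f p (N - p) * pochhammer ((j + of_nat (N - p)) + x) p"
      unfolding vdm[of "j + of_nat (N - p)" x p] sum_distrib_left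
    proof (intro sum.cong refl)
      fix k assume k: "k \<in> {..p}"
      have e1: "p - k + k = p" using k by auto
      have e2: "N - (p - k) = N - p + k" using k p by auto
      show "h (p - k) k = f p (N - p) * (of_nat (p choose k) * ffc x k * pochhammer (j + of_nat (N - p) + of_nat k) (p - k))"
        unfolding h_def e1 e2 using p k by (simp add: algebra_simps of_nat_diff)
    qed
  qed
  also have "\<dots> = sig f N (j + x)" unfolding sig_def by (simp add: add_ac)
  finally show ?thesis .
qed



lemma sig_inj:
  assumes "\<And>N j. sig f N j = sig g N j" shows "f = g"
proof (intro ext)
  fix p q :: nat
  define N where "N = p + q"
  define d where "d i = f i (N - i) - g i (N - i)" for i
  have D: "(\<Sum>i\<le>N. d i * pochhammer (j + of_nat (N - i)) i) = 0" for j
    using assms[of N j] unfolding sig_def d_def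
    by (simp add: sum_subtractf left_diff_distrib)
  have step: "d m = 0" if m: "m \<le> N" and IH: "\<forall>i<m. d i = 0" for m
  proof -
    define j :: complex where "j = of_nat (m+1) - of_nat N"
    have "0 = (\<Sum>i\<le>N. d i * pochhammer (j + of_nat (N - i)) i)" using D by simp
    also have "\<dots> = (\<Sum>i\<le>N. if i = m then d m * fact m else 0)"
    proof (rule sum.cong[OF refl])
      fix i assume i: "i \<in> {..N}"
      have ji: "j + of_nat (N - i) = of_nat (m + 1) - of_nat i"
        using i by (simp add: j_def of_nat_diff)
      show "d i * pochhammer (j + of_nat (N - i)) i = (if i = m then d m * fact m else 0)"
      proof (cases "i < m")
        case True then show ?thesis using IH by auto
      next
        case False
        show ?thesis
        proof (cases "i = m")
          case True then show ?thesis unfolding ji by (simp add: pochhammer_fact)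
        next
          case ne: False
          with False have "i > m" by simp
          then have "(of_nat (m + 1) - of_nat i :: complex) = - of_nat (i - m - 1)"
            by (simp add: of_nat_diff)
          moreover have "pochhammer (- of_nat (i - m - 1) :: complex) i = 0"
            using \<open>i > m\<close> by (subst pochhammer_of_nat_eq_0_iff) simp
          ultimately show ?thesis using ne unfolding ji by simp
        qed
      qed
    qed
    also have "\<dots> = d m * fact m" using m by simp
    finally show "d m = 0" by simp
  qed
  have "\<forall>i<m. d i = 0" if "m \<le> N + 1" for m
    using that
  proof (induction m)
    case 0 then show ?case by simp
  next
    case (Suc m)
    then have "\<forall>i<m. d i = 0" by simp
    moreover then have "d m = 0" using Suc.prems step by simp
    ultimately show ?case using less_Suc_eq by auto
  qed
  from this[of "N+1"] have "d p = 0" unfolding N_def by simp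
  then show "f p q = g p q" unfolding d_def N_def by simp
qed



lemma ext_sum:
  fixes F G :: "nat \<Rightarrow> 'a::comm_monoid_add"
  assumes "n \<le> N" "\<And>i. i \<le> n \<Longrightarrow> F i = G i" "\<And>i. n < i \<Longrightarrow> i \<le> N \<Longrightarrow> G i = 0"
  shows "sum F {..n} = sum G {..N}"
proof -
  have "sum F {..n} = sum G {..n}" using assms(2) by (intro sum.cong) auto
  also have "\<dots> = sum G {..N}"
    using assms(1,3) by (intro sum.mono_neutral_left) auto
  finally show ?thesis .
qed

lemma collapse:
  fixes F :: "nat \<Rightarrow> 'a::comm_monoid_add"
  assumes "finite A" "\<And>m. m \<in> A \<Longrightarrow> P m \<longleftrightarrow> m = m0 \<and> Q" "Q \<Longrightarrow> m0 \<in> A"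
  shows "(\<Sum>m\<in>A. if P m then F m else 0) = (if Q then F m0 else 0)"
proof -
  have "(\<Sum>m\<in>A. if P m then F m else 0) = (\<Sum>m\<in>A. if m = m0 then (if Q then F m0 else 0) else 0)"
    using assms(2) by (intro sum.cong) auto
  also have "\<dots> = (if Q then F m0 else 0)" using assms(1,3) by (simp add: sum.delta)
  finally show ?thesis .
qed

lemma swap6:
  "(\<Sum>m\<in>A. \<Sum>p\<in>A. \<Sum>q\<in>A. \<Sum>r\<in>A. \<Sum>s\<in>A. \<Sum>k\<in>A. F m p q r s k) =
   (\<Sum>p\<in>A. \<Sum>q\<in>A. \<Sum>r\<in>A. \<Sum>s\<in>A. \<Sum>k\<in>A. \<Sum>m\<in>A. F m p q r s k)"
  apply (rule trans[OF sum.swap])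
  apply (rule sum.cong[OF refl])
  apply (rule trans[OF sum.swap])
  apply (rule sum.cong[OF refl])
  apply (rule trans[OF sum.swap])
  apply (rule sum.cong[OF refl])
  apply (rule trans[OF sum.swap])
  apply (rule sum.cong[OF refl])
  apply (rule sum.swap)
  done

lemma swap5:
  "(\<Sum>m\<in>A. \<Sum>p\<in>A. \<Sum>q\<in>A. \<Sum>r\<in>A. \<Sum>s\<in>A. F m p q r s) =
   (\<Sum>p\<in>A. \<Sum>q\<in>A. \<Sum>r\<in>A. \<Sum>s\<in>A. \<Sum>m\<in>A. F m p q r s)"
  apply (rule trans[OF sum.swap])
  apply (rule sum.cong[OF refl])
  apply (rule trans[OF sum.swap])
  apply (rule sum.cong[OF refl])
  apply (rule trans[OF sum.swap])
  apply (rule sum.cong[OF refl])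
  apply (rule sum.swap)
  done

lemma amul_box:
  assumes m: "m \<le> N"
  shows "amul f g m (N - m) = (\<Sum>p\<le>N. \<Sum>q\<le>N. \<Sum>r\<le>N. \<Sum>s\<le>N. \<Sum>k\<le>N.
        if p + r = m + k \<and> q + k + s = N - m
        then f p q * g r s * of_nat (r choose k) * (-1) ^ k * pochhammer (of_nat q) k
        else 0)"
proof -
  have e: "m + (N - m) = N" using m by simp
  show ?thesis
    unfolding amul_def e
    apply (rule sum.cong[OF refl])
    apply (rule ext_sum)
    subgoal by simp
    subgoal
     apply (rule sum.cong[OF refl])
     apply (rule ext_sum)
     subgoal by simp
     subgoal
      apply (rule ext_sum)
      subgoal by simp
      subgoal by simp
      subgoal by auto
      done
     subgoal by (intro sum.neutral ballI) auto
     done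
    subgoal by (intro sum.neutral ballI) auto
    done
qed



lemma if_mult0: "(if c then a else 0) * b = (if c then a * b else (0::'a::mult_zero))"
  by simp

lemma if_mult_if: "(if c then a else 0) * (if d then b else 0) = (if c \<and> d then a * b else (0::'a::mult_zero))"
  by simp

lemma split2:
  fixes h :: "nat \<Rightarrow> nat \<Rightarrow> 'a::comm_monoid_add"
  assumes "n \<le> N"
  shows "(\<Sum>p\<le>n. h p (n - p)) = (\<Sum>p\<le>N. \<Sum>q\<le>N. if p + q = n then h p q else 0)"
proof -
  have "(\<Sum>q\<le>N. if p + q = n then h p q else 0) = (if p \<le> n then h p (n - p) else 0)" for p
    by (rule collapse) (use assms in auto)
  then have "(\<Sum>p\<le>N. \<Sum>q\<le>N. if p + q = n then h p q else 0) = (\<Sum>p\<le>N. if p \<le> n then h p (n - p) else 0)"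
    by simp
  also have "\<dots> = (\<Sum>p\<le>n. h p (n - p))"
    by (rule ext_sum[symmetric]) (use assms in auto)
  finally show ?thesis by simp
qed

lemma sig_amul: "sig (amul f g) N j = (\<Sum>M\<le>N. sig f (N - M) (j + of_nat M) * sig g M j)"
proof -
  define T where "T p q r s k = f p q * g r s * of_nat (r choose k) * (-1) ^ k * pochhammer (of_nat q) k"
    for p q r s k
  define W where "W p q r s = (if p + q + r + s = N then f p q * g r s *
      pochhammer (j + of_nat (q + r + s)) p * pochhammer (j + of_nat s) r else 0)" for p q r s
  have "sig (amul f g) N j = (\<Sum>m\<le>N. \<Sum>p\<le>N. \<Sum>q\<le>N. \<Sum>r\<le>N. \<Sum>s\<le>N. \<Sum>k\<le>N.
      if p + r = m + k \<and> q + k + s = N - m then T p q r s k * pochhammer (j + of_nat (N - m)) m else 0)"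
    unfolding sig_def T_def
    by (rule sum.cong[OF refl]) (simp add: amul_box sum_distrib_right if_mult0 del: of_nat_diff)
  also have "\<dots> = (\<Sum>p\<le>N. \<Sum>q\<le>N. \<Sum>r\<le>N. \<Sum>s\<le>N. \<Sum>k\<le>N. \<Sum>m\<le>N.
      if p + r = m + k \<and> q + k + s = N - m then T p q r s k * pochhammer (j + of_nat (N - m)) m else 0)"
    by (rule swap6)
  also have "\<dots> = (\<Sum>p\<le>N. \<Sum>q\<le>N. \<Sum>r\<le>N. \<Sum>s\<le>N. \<Sum>k\<le>N.
      if k \<le> p + r \<and> p + q + r + s = N then T p q r s k * pochhammer (j + of_nat (q + s + k)) (p + r - k) else 0)"
  proof (intro sum.cong refl)
    fix p q r s k
    have "(\<Sum>m\<le>N. if p + r = m + k \<and> q + k + s = N - m then T p q r s k * pochhammer (j + of_nat (N - m)) m else 0)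
      = (if k \<le> p + r \<and> p + q + r + s = N then T p q r s k * pochhammer (j + of_nat (N - (p + r - k))) (p + r - k) else 0)"
      by (rule collapse) auto
    also have "\<dots> = (if k \<le> p + r \<and> p + q + r + s = N then T p q r s k * pochhammer (j + of_nat (q + s + k)) (p + r - k) else 0)"
    proof (cases "k \<le> p + r \<and> p + q + r + s = N")
      case True
      then have "N - (p + r - k) = q + s + k" by auto
      then show ?thesis using True by (simp only: if_P)
    next
      case False
      then show ?thesis by (simp only: if_not_P if_False)
    qed
    finally show "(\<Sum>m\<le>N. if p + r = m + k \<and> q + k + s = N - m then T p q r s k * pochhammer (j + of_nat (N - m)) m else 0)
      = (if k \<le> p + r \<and> p + q + r + s = N then T p q r s k * pochhammer (j + of_nat (q + s + k)) (p + r - k) else 0)" .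
  qed
  also have "\<dots> = (\<Sum>p\<le>N. \<Sum>q\<le>N. \<Sum>r\<le>N. \<Sum>s\<le>N. W p q r s)"
  proof (intro sum.cong refl)
    fix p q r s assume r: "r \<in> {..N}"
    show "(\<Sum>k\<le>N. if k \<le> p + r \<and> p + q + r + s = N then T p q r s k * pochhammer (j + of_nat (q + s + k)) (p + r - k) else 0)
      = W p q r s"
    proof (cases "p + q + r + s = N")
      case False then show ?thesis unfolding W_def by simp
    next
      case True
      have "(\<Sum>k\<le>N. if k \<le> p + r \<and> p + q + r + s = N then T p q r s k * pochhammer (j + of_nat (q + s + k)) (p + r - k) else 0)
        = (\<Sum>k\<le>r. T p q r s k * pochhammer (j + of_nat (q + s + k)) (p + r - k))"
        by (rule ext_sum[symmetric]) (use r True in \<open>auto simp: T_def\<close>)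
      also have "\<dots> = (\<Sum>k\<le>r. f p q * g r s * pochhammer (j + of_nat (q + r + s)) p *
          (of_nat (r choose k) * ffc (- of_nat q) k * pochhammer (j + of_nat (q + s) + of_nat k) (r - k)))"
      proof (rule sum.cong[OF refl])
        fix k assume k: "k \<in> {..r}"
        have e: "p + r - k = (r - k) + p" using k by auto
        have e2: "j + of_nat (q + s + k) + of_nat (r - k) = j + of_nat (q + r + s)"
          using k by (simp add: of_nat_diff)
        show "T p q r s k * pochhammer (j + of_nat (q + s + k)) (p + r - k) = f p q * g r s * pochhammer (j + of_nat (q + r + s)) p *
          (of_nat (r choose k) * ffc (- of_nat q) k * pochhammer (j + of_nat (q + s) + of_nat k) (r - k))"
          unfolding e pochhammer_product' e2 T_def ffc_def by (simp add: mult_ac add_ac)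
      qed
      also have "\<dots> = f p q * g r s * pochhammer (j + of_nat (q + r + s)) p *
          pochhammer (j + of_nat (q + s) + (- of_nat q)) r"
        unfolding sum_distrib_left[symmetric] vdm[of "j + of_nat (q + s)" "- of_nat q" r] ..
      also have "\<dots> = W p q r s" unfolding W_def using True by simp
      finally show ?thesis .
    qed
  qed
  also have "\<dots> = (\<Sum>M\<le>N. sig f (N - M) (j + of_nat M) * sig g M j)"
  proof -
    have R1: "sig f (N - M) (j + of_nat M) = (\<Sum>p\<le>N. \<Sum>q\<le>N. if p + q = N - M then f p q * pochhammer (j + of_nat M + of_nat q) p else 0)"
      for M
      unfolding sig_def by (rule split2[where h="\<lambda>p q. f p q * pochhammer (j + of_nat M + of_nat q) p"]) simp
    have R2: "sig g M j = (\<Sum>r\<le>N. \<Sum>s\<le>N. if r + s = M then g r s * pochhammer (j + of_nat s) r else 0)"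
      if "M \<le> N" for M
      unfolding sig_def by (rule split2[where h="\<lambda>p q. g p q * pochhammer (j + of_nat q) p"]) (use that in simp)
    have "(\<Sum>M\<le>N. sig f (N - M) (j + of_nat M) * sig g M j) =
      (\<Sum>M\<le>N. \<Sum>p\<le>N. \<Sum>q\<le>N. \<Sum>r\<le>N. \<Sum>s\<le>N.
        if p + q = N - M \<and> r + s = M then f p q * pochhammer (j + of_nat M + of_nat q) p * (g r s * pochhammer (j + of_nat s) r) else 0)"
      apply (rule sum.cong[OF refl])
      apply (simp only: R1 R2 atMost_iff sum_distrib_right)
      apply (simp only: sum_distrib_left if_mult_if)
      done
    also have "\<dots> = (\<Sum>p\<le>N. \<Sum>q\<le>N. \<Sum>r\<le>N. \<Sum>s\<le>N. \<Sum>M\<le>N.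
        if p + q = N - M \<and> r + s = M then f p q * pochhammer (j + of_nat M + of_nat q) p * (g r s * pochhammer (j + of_nat s) r) else 0)"
      by (rule swap5)
    also have "\<dots> = (\<Sum>p\<le>N. \<Sum>q\<le>N. \<Sum>r\<le>N. \<Sum>s\<le>N. W p q r s)"
    proof (intro sum.cong refl)
      fix p q r s
      have "(\<Sum>M\<le>N. if p + q = N - M \<and> r + s = M then f p q * pochhammer (j + of_nat M + of_nat q) p * (g r s * pochhammer (j + of_nat s) r) else 0)
        = (if p + q + r + s = N then f p q * pochhammer (j + of_nat (r + s) + of_nat q) p * (g r s * pochhammer (j + of_nat s) r) else 0)"
        by (rule collapse) auto
      also have "\<dots> = W p q r s" unfolding W_def by (simp add: mult_ac add_ac)
      finally show "(\<Sum>M\<le>N. if p + q = N - M \<and> r + s = M then f p q * pochhammer (j + of_nat M + of_nat q) p * (g r s * pochhammer (j + of_nat s) r) else 0)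
        = W p q r s" .
    qed
    finally show ?thesis by simp
  qed
  finally show ?thesis .
qed



lemma tau_mult: "tau x (amul f g) = amul (tau x f) (tau x g)"
proof (rule sig_inj)
  fix N j
  show "sig (tau x (amul f g)) N j = sig (amul (tau x f) (tau x g)) N j"
    unfolding sig_tau sig_amul by (simp add: add_ac)
qed

lemma tau_inv: "tau (-x) (tau x f) = f"
  by (rule sig_inj) (simp add: sig_tau)

lemma tau_add: "tau x (aadd f g) = aadd (tau x f) (tau x g)"
  unfolding tau_def aadd_def by (simp add: sum.distrib algebra_simps)

lemma tau_scale: "tau x (ascale c f) = ascale c (tau x f)"
  unfolding tau_def ascale_def by (simp add: sum_distrib_left algebra_simps)

lemma tau_Bzero:
  assumes "\<And>p q. p \<noteq> 0 \<Longrightarrow> S p q = 0"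
  shows "tau x S = S"
proof (intro ext)
  fix m n
  have "tau x S m n = (\<Sum>k\<le>n. if k = 0 then S m n else 0)"
    unfolding tau_def
  proof (rule sum.cong[OF refl])
    fix k assume "k \<in> {..n}"
    show "of_nat ((m + k) choose k) * ffc x k * S (m + k) (n - k) = (if k = 0 then S m n else 0)"
      using assms[of "m + k" "n - k"] by (cases "k = 0") auto
  qed
  also have "\<dots> = S m n" by simp
  finally show "tau x S m n = S m n" .
qed

lemma tau_one: "tau x aone = aone"
  by (rule tau_Bzero) (simp add: aone_def)

lemma tau_b: "tau x bgen = bgen"
  by (rule tau_Bzero) (simp add: bgen_def)

lemma tau_a: "tau x agen = aadd agen (ascale x bgen)"
proof (intro ext)
  fix m n
  have "tau x agen m n = (\<Sum>k\<le>n. if k = n then of_nat ((m + n) choose n) * ffc x n * agen (m + n) 0 else 0)"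
    unfolding tau_def
  proof (rule sum.cong[OF refl])
    fix k assume "k \<in> {..n}"
    then show "of_nat ((m + k) choose k) * ffc x k * agen (m + k) (n - k) =
      (if k = n then of_nat ((m + n) choose n) * ffc x n * agen (m + n) 0 else 0)"
      by (cases "k = n") (auto simp: agen_def)
  qed
  also have "\<dots> = of_nat ((m + n) choose n) * ffc x n * agen (m + n) 0" by simp
  also have "\<dots> = aadd agen (ascale x bgen) m n"
  proof (cases "m + n = 1")
    case True
    then have "(m = 1 \<and> n = 0) \<or> (m = 0 \<and> n = 1)" by auto
    then show ?thesis
      by (auto simp: agen_def bgen_def aadd_def ascale_def ffc_def)
  next
    case False
    then show ?thesis by (auto simp: agen_def bgen_def aadd_def ascale_def)
  qed
  finally show "tau x agen m n = aadd agen (ascale x bgen) m n" .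
qed

lemma ffc_bound: "norm (ffc x k) \<le> (norm x + 1) ^ k * fact k"
proof (induction k)
  case 0 then show ?case by simp
next
  case (Suc k)
  have "norm (x - of_nat k) \<le> norm x + of_nat k"
    using norm_triangle_ineq4[of x "of_nat k"] by simp
  also have "\<dots> \<le> (norm x + 1) * (of_nat k + 1)"
    by (simp add: algebra_simps)
  finally have h: "norm (x - of_nat k) \<le> (norm x + 1) * (of_nat k + 1)" .
  have "norm (ffc x (Suc k)) = norm (ffc x k) * norm (x - of_nat k)"
    by (simp add: ffc_Suc norm_mult)
  also have "\<dots> \<le> ((norm x + 1) ^ k * fact k) * ((norm x + 1) * (of_nat k + 1))"
    by (intro mult_mono Suc.IH h) auto
  also have "\<dots> = (norm x + 1) ^ Suc k * fact (Suc k)"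
    by (simp add: algebra_simps)
  finally show ?case .
qed

lemma tau_Aconv:
  assumes "f \<in> Aconv" shows "tau x f \<in> Aconv"
proof -
  from assms obtain R C :: real where R: "R > 1" and C: "C > 0"
    and bd: "\<And>p q. norm (f p q) \<le> C * R ^ (p + q) * fact q"
    unfolding Aconv_def by blast
  define X where "X = norm x + 1"
  have X: "X \<ge> 1" unfolding X_def by simp
  define R' where "R' = 2 * (2 * R * X)"
  have "R \<le> R * X" using R X by (simp add: mult_le_cancel_left1)
  then have R': "R' > 1" unfolding R'_def using R by linarith
  have termb: "norm (of_nat ((m + k) choose k) * ffc x k * f (m + k) (n - k))
      \<le> C * (2 * R * X) ^ (m + n) * fact n" if k: "k \<le> n" for m n k
  proof -
    have a: "real ((m + k) choose k) \<le> 2 ^ (m + n)"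
    proof -
      have "(m + k) choose k \<le> 2 ^ (m + k)" by (rule binomial_le_pow2)
      also have "(2::nat) ^ (m + k) \<le> 2 ^ (m + n)" using k by (intro power_increasing) auto
      finally have "(m + k) choose k \<le> (2::nat) ^ (m + n)" .
      then show ?thesis by (metis of_nat_le_iff of_nat_numeral of_nat_power)
    qed
    have b: "norm (ffc x k) \<le> X ^ (m + n) * fact k"
    proof -
      have "norm (ffc x k) \<le> X ^ k * fact k" using ffc_bound[of x k] unfolding X_def .
      also have "\<dots> \<le> X ^ (m + n) * fact k"
        using X k by (intro mult_right_mono power_increasing) auto
      finally show ?thesis .
    qed
    have c: "norm (f (m + k) (n - k)) \<le> C * R ^ (m + n) * fact (n - k)"
      using bd[of "m + k" "n - k"] k by simp
    have d: "fact k * fact (n - k) \<le> (fact n :: real)"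
    proof -
      have "real (fact k * fact (n - k) * (n choose k)) = real (fact n)"
        using binomial_fact_lemma[OF k] by simp
      then have "fact k * fact (n - k) * real (n choose k) = fact n"
        by (simp only: of_nat_mult of_nat_fact)
      moreover have "fact k * fact (n - k) * 1 \<le> fact k * fact (n - k) * real (n choose k)"
        using k zero_less_binomial[OF k] by (intro mult_left_mono) (auto simp: Suc_le_eq)
      ultimately show ?thesis by simp
    qed
    have "norm (of_nat ((m + k) choose k) * ffc x k * f (m + k) (n - k))
       = real ((m + k) choose k) * norm (ffc x k) * norm (f (m + k) (n - k))"
      by (simp add: norm_mult)
    also have "\<dots> \<le> 2 ^ (m + n) * (X ^ (m + n) * fact k) * (C * R ^ (m + n) * fact (n - k))"
      using X by (intro mult_mono a b c) auto
    also have "\<dots> = C * (2 * R * X) ^ (m + n) * (fact k * fact (n - k))"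
      by (simp add: power_mult_distrib algebra_simps)
    also have "\<dots> \<le> C * (2 * R * X) ^ (m + n) * fact n"
      using C R X d by (intro mult_left_mono) auto
    finally show ?thesis .
  qed
  have "norm (tau x f m n) \<le> C * R' ^ (m + n) * fact n" for m n
  proof -
    have "norm (tau x f m n) \<le> (\<Sum>k\<le>n. norm (of_nat ((m + k) choose k) * ffc x k * f (m + k) (n - k)))"
      unfolding tau_def by (rule norm_sum)
    also have "\<dots> \<le> (\<Sum>k\<le>n. C * (2 * R * X) ^ (m + n) * fact n)"
      by (intro sum_mono termb) auto
    also have "\<dots> = real (Suc n) * (C * (2 * R * X) ^ (m + n) * fact n)" by simp
    also have "\<dots> \<le> 2 ^ (m + n) * (C * (2 * R * X) ^ (m + n) * fact n)"
    proof (intro mult_right_mono)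
      have "Suc n \<le> 2 ^ n" using less_exp[of n] by (simp only: Suc_le_eq)
      also have "(2::nat) ^ n \<le> 2 ^ (m + n)" by (intro power_increasing) auto
      finally have "Suc n \<le> (2::nat) ^ (m + n)" .
      then show "real (Suc n) \<le> 2 ^ (m + n)"
        by (metis of_nat_le_iff of_nat_numeral of_nat_power)
      show "0 \<le> C * (2 * R * X) ^ (m + n) * fact n" using C R X by simp
    qed
    also have "\<dots> = C * R' ^ (m + n) * fact n"
      unfolding R'_def by (simp only: power_mult_distrib mult_ac)
    finally show ?thesis .
  qed
  then show ?thesis unfolding Aconv_def using R' C by blast
qed


theorem proposition1p2p1:
  fixes x :: complex
  shows "\<exists>\<tau>. bij_betw \<tau> Aconv Aconv \<and>
    (\<forall>f\<in>Aconv. \<forall>g\<in>Aconv. \<tau> (aadd f g) = aadd (\<tau> f) (\<tau> g)) \<and>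
    (\<forall>c. \<forall>f\<in>Aconv. \<tau> (ascale c f) = ascale c (\<tau> f)) \<and>
    (\<forall>f\<in>Aconv. \<forall>g\<in>Aconv. \<tau> (amul f g) = amul (\<tau> f) (\<tau> g)) \<and>
    \<tau> aone = aone \<and>
    (\<forall>S\<in>Bset. \<forall>T\<in>Bset. \<forall>X\<in>Aconv. \<tau> (amul (amul S X) T) = amul (amul S (\<tau> X)) T) \<and>
    \<tau> agen = aadd agen (ascale x bgen) \<and>
    \<tau> bgen = bgen"
proof (intro exI[of _ "tau x"] conjI ballI allI)
  show "bij_betw (tau x) Aconv Aconv"
  proof (rule bij_betw_byWitness[where f'="tau (-x)"])
    show "\<forall>a\<in>Aconv. tau (- x) (tau x a) = a" by (simp add: tau_inv)
    show "\<forall>a\<in>Aconv. tau x (tau (- x) a) = a" using tau_inv[of "-x"] by simp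
    show "tau x ` Aconv \<subseteq> Aconv" using tau_Aconv by blast
    show "tau (- x) ` Aconv \<subseteq> Aconv" using tau_Aconv by blast
  qed
next
  fix S T X assume S: "S \<in> Bset" and T: "T \<in> Bset"
  have "tau x S = S" using S unfolding Bset_def by (intro tau_Bzero) auto
  moreover have "tau x T = T" using T unfolding Bset_def by (intro tau_Bzero) auto
  ultimately show "tau x (amul (amul S X) T) = amul (amul S (tau x X)) T"
    by (simp add: tau_mult)
qed (simp_all add: tau_add tau_scale tau_mult tau_one tau_a tau_b)

end
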